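(* Consider the reduced (limit) problem of the repeated wage theft game with fixed strategies and time-converging worker forecasts, as described in the context, and suppose $C'(0)<Py_H-Py_L$. Then there exists an optimal solution $(a^*,w_H^*,w_L^*,b_H^*,b_L^* )$ of this problem with $a^*\in(0,1)$ and $b_H^*=b_L^*=0$.
   Context: Fix $P>0$, $y_H>y_L\ge0$, a real number $u$ and $\gamma\in(0,1]$. Let $C:[0,1)\to\mathbb{R}$ satisfy $C(0)=0$, increasing, strictly convex, twice differentiable, $C(a)\to\infty$ as $a\to1$; let $\eta:[0,\infty)\to\mathbb{R}$ be strictly convex, increasing, twice differentiable with $\eta(0)=0$. In the repeated wage theft game, in each period $t$ the employer promises wages $w_i^t$ and steals $b_i^t$ ($i\in\{H,L\}$), and the worker, forecasting theft $\hat b_i^t$ from past thefts $b_i^1,\dots,b_i^{t-1}$, chooses effort as if receiving $(w_i^t-\hat b_i^t)^+$. A forecast is time-converging if whenever $b_i^t=b_i$ for all $t\ge t_0$, $\hat b_i^t\to b_i$ as $t\to\infty$. When the employer uses a fixed strategy $(w_H,w_L,b_H,b_L)$ in every period and the worker uses a time-converging forecast, the game reduces to the following problem: choose $a,w_H,w_L,b_H,b_L$ to maximize $a\,(Py_H-w_H+b_H-\gamma\eta(b_H))+(1-a)\,(Py_L-w_L+b_L-\gamma\eta(b_L))$ subject to $a\in\arg\max_{a'\in[0,1)}\{a'(w_H-b_H)+(1-a')(w_L-b_L)-C(a')\}$; $a(w_H-b_H)+(1-a)(w_L-b_L)-C(a)\ge u$; $0\le b_L\le w_L$, $0\le b_H\le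 w_H$; $a\in[0,1)$. *)

theory Defs
  imports "HOL-Analysis.Analysis"
begin

definition strictly_convex_on :: "real set \<Rightarrow> (real \<Rightarrow> real) \<Rightarrow> bool" where
  "strictly_convex_on S f \<longleftrightarrow> convex S \<and>
     (\<forall>x\<in>S. \<forall>y\<in>S. \<forall>t. x \<noteq> y \<and> 0 < t \<and> t < 1 \<longrightarrow>
        f (t * x + (1 - t) * y) < t * f x + (1 - t) * f y)"

definition wt_obj :: "real \<Rightarrow> real \<Rightarrow> real \<Rightarrow> real \<Rightarrow> (real \<Rightarrow> real) \<Rightarrow> real \<Rightarrow> real \<Rightarrow> real \<Rightarrow> real \<Rightarrow> real \<Rightarrow> real" where
  "wt_obj P yH yL \<gamma> \<eta> a wH wL bH bL =
     a * (P * yH - wH + bH - \<gamma> * \<eta> bH) + (1 - a) * (P * yL - wL + bL - \<gamma> * \<eta> bL)"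

definition wt_worker :: "(real \<Rightarrow> real) \<Rightarrow> real \<Rightarrow> real \<Rightarrow> real \<Rightarrow> real \<Rightarrow> real \<Rightarrow> real" where
  "wt_worker C wH wL bH bL a' = a' * (wH - bH) + (1 - a') * (wL - bL) - C a'"

definition wt_feasible :: "(real \<Rightarrow> real) \<Rightarrow> real \<Rightarrow> real \<Rightarrow> real \<Rightarrow> real \<Rightarrow> real \<Rightarrow> real \<Rightarrow> bool" where
  "wt_feasible C u a wH wL bH bL \<longleftrightarrow>
     a \<in> {0..<1} \<and>
     (\<forall>a'\<in>{0..<1}. wt_worker C wH wL bH bL a' \<le> wt_worker C wH wL bH bL a) \<and>
     wt_worker C wH wL bH bL a \<ge> u \<and>
     0 \<le> bL \<and> bL \<le> wL \<and> 0 \<le> bH \<and> bH \<le> wH"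

definition wt_optimal :: "real \<Rightarrow> real \<Rightarrow> real \<Rightarrow> real \<Rightarrow> (real \<Rightarrow> real) \<Rightarrow> (real \<Rightarrow> real) \<Rightarrow> real
     \<Rightarrow> real \<Rightarrow> real \<Rightarrow> real \<Rightarrow> real \<Rightarrow> real \<Rightarrow> bool" where
  "wt_optimal P yH yL \<gamma> \<eta> C u a wH wL bH bL \<longleftrightarrow>
     wt_feasible C u a wH wL bH bL \<and>
     (\<forall>a' wH' wL' bH' bL'. wt_feasible C u a' wH' wL' bH' bL' \<longrightarrow>
        wt_obj P yH yL \<gamma> \<eta> a' wH' wL' bH' bL' \<le> wt_obj P yH yL \<gamma> \<eta> a wH wL bH bL)"

end

theory Submission
  imports Defs
begin

lemma strict_imp_convex_on:
  fixes f :: "real \<Rightarrow> real"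
  assumes "strictly_convex_on S f"
  shows "convex_on S f"
proof (rule convex_onI)
  show "convex S" using assms unfolding strictly_convex_on_def by blast
next
  fix t x y :: real assume t: "0 < t" "t < 1" and xy: "x \<in> S" "y \<in> S"
  show "f ((1 - t) *\<^sub>R x + t *\<^sub>R y) \<le> (1 - t) * f x + t * f y"
  proof (cases "x = y")
    case True then show ?thesis by (simp add: algebra_simps)
  next
    case False
    have H: "\<And>x y t. x \<in> S \<Longrightarrow> y \<in> S \<Longrightarrow> x \<noteq> y \<Longrightarrow> 0 < t \<Longrightarrow> t < 1 \<Longrightarrow>
        f (t * x + (1 - t) * y) < t * f x + (1 - t) * f y"
      using assms unfolding strictly_convex_on_def by blast
    have "f ((1 - t) * x + (1 - (1 - t)) * y) < (1 - t) * f x + (1 - (1 - t)) * f y"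
      using H[of x y "1 - t"] False t xy by simp
    then show ?thesis by simp
  qed
qed

theorem theorem2:
  fixes P yH yL u \<gamma> :: real
    and C C1 C2 \<eta> \<eta>1 \<eta>2 :: "real \<Rightarrow> real"
  assumes P: "P > 0" and y: "yH > yL" "yL \<ge> 0" and \<gamma>: "0 < \<gamma>" "\<gamma> \<le> 1"
    and C0: "C 0 = 0"
    and Cmono: "mono_on {0..<1} C"
    and Cconv: "strictly_convex_on {0..<1} C"
    and C1: "\<And>x. x \<in> {0..<1} \<Longrightarrow> (C has_real_derivative C1 x) (at x within {0..<1})"
    and C2: "\<And>x. x \<in> {0..<1} \<Longrightarrow> (C1 has_real_derivative C2 x) (at x within {0..<1})"
    and Clim: "filterlim C at_top (at_left 1)"
    and \<eta>0: "\<eta> 0 = 0"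
    and \<eta>mono: "mono_on {0..} \<eta>"
    and \<eta>conv: "strictly_convex_on {0..} \<eta>"
    and \<eta>1: "\<And>x. x \<in> {0..} \<Longrightarrow> (\<eta> has_real_derivative \<eta>1 x) (at x within {0..})"
    and \<eta>2: "\<And>x. x \<in> {0..} \<Longrightarrow> (\<eta>1 has_real_derivative \<eta>2 x) (at x within {0..})"
    and hC: "C1 0 < P * yH - P * yL"
  shows "\<exists>a wH wL. wt_optimal P yH yL \<gamma> \<eta> C u a wH wL 0 0 \<and> 0 < a \<and> a < 1"
proof -
  define D where "D = P * yH - P * yL"
  define V where "V a = P * yL + a * D - max (a * C1 a) (u + C a)" for a
  have cvx: "convex_on {0..<1} C" using Cconv by (rule strict_imp_convex_on)
  have tang: "C x - C c \<ge> C1 c * (x - c)" if "0 < c" "c < 1" "0 \<le> x" "x < 1" for x c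
    using convex_on_imp_above_tangent[OF cvx _ _ _ C1[of c]] that by auto
  have C1nn: "C1 c \<ge> 0" if "0 < c" "c < 1" for c
  proof -
    have "C 0 - C c \<ge> C1 c * (0 - c)" using tang[of c 0] that by auto
    moreover have "C 0 \<le> C c" using Cmono that by (auto intro: mono_onD)
    ultimately have "c * C1 c \<ge> 0" by (simp add: algebra_simps)
    then show ?thesis using that by (simp add: zero_le_mult_iff)
  qed
  have Cle: "C c \<le> c * C1 c" if "0 < c" "c < 1" for c
    using tang[of c 0] that C0 by (simp add: algebra_simps)
  have contC: "continuous_on {0..<1} C"
    using C1 DERIV_continuous continuous_on_eq_continuous_within by blast
  have contC1: "continuous_on {0..<1} C1"
    using C2 DERIV_continuous continuous_on_eq_continuous_within by blast
  have contV: "continuous_on {0..<1} V"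
    unfolding V_def by (intro continuous_intros contC contC1)
  have Dpos: "D > 0" using P y unfolding D_def by simp
  have V0: "V 0 = P * yL - max 0 u" using C0 by (simp add: V_def)
  have Vup: "V a \<le> P * yL + D - u - C a" if "0 \<le> a" "a < 1" for a
  proof -
    have "a * D \<le> D" using that Dpos by (simp add: mult_left_le_one_le)
    moreover have "u + C a \<le> max (a * C1 a) (u + C a)" by simp
    ultimately show ?thesis unfolding V_def by linarith
  qed
  obtain e where e: "0 < e" "e < 1" "\<And>a. 1 - e < a \<Longrightarrow> a < 1 \<Longrightarrow> V a < V 0"
  proof -
    have ev1: "\<forall>\<^sub>F x in at_left 1. P * yL + D - u - V 0 + 1 \<le> C x"
      using Clim unfolding filterlim_at_top by blast
    have ev2: "\<forall>\<^sub>F x in at_left (1::real). x \<in> {0<..<1}"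
      by (rule eventually_at_left_real) simp
    have "\<forall>\<^sub>F x in at_left (1::real). P * yL + D - u - V 0 + 1 \<le> C x \<and> x \<in> {0<..<1}"
      using ev1 ev2 by (rule eventually_conj)
    then obtain b where b: "b < 1" "\<And>y. b < y \<Longrightarrow> y < 1 \<Longrightarrow> P * yL + D - u - V 0 + 1 \<le> C y \<and> y \<in> {0<..<1}"
      using eventually_at_left[of 0 "1::real"] by auto
    define e where "e = min (1 - b) (1/2)"
    show ?thesis
    proof (rule that[of e])
      show "0 < e" "e < 1" using b by (auto simp: e_def)
      fix a assume a: "1 - e < a" "a < 1"
      then have "b < a" by (auto simp: e_def)
      then have "P * yL + D - u - V 0 + 1 \<le> C a" "a > 0" using b a by auto
      then show "V a < V 0" using Vup[of a] a by auto
    qed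
  qed
  obtain a1 where a1: "0 < a1" "a1 < 1" "V a1 > V 0"
  proof -
    have "continuous (at 0 within {0..<1}) C1"
      using C2[of 0] DERIV_continuous by auto
    then obtain d where d: "d > 0" "\<And>x. x \<in> {0..<1} \<Longrightarrow> dist x 0 < d \<Longrightarrow> dist (C1 x) (C1 0) < D - C1 0"
      unfolding continuous_within_eps_delta using hC D_def by (metis diff_gt_0_iff_gt)
    define a where "a = min (d/2) (1/2)"
    have a: "0 < a" "a < 1" "a < d" using d by (auto simp: a_def)
    then have "dist (C1 a) (C1 0) < D - C1 0" using d by (auto simp: dist_real_def)
    then have lt: "C1 a < D" by (auto simp: dist_real_def)
    have "V a \<ge> P * yL + a * D - a * C1 a - max 0 u"
      unfolding V_def using Cle[of a] a by auto
    moreover have "a * C1 a < a * D" using lt a by simp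
    ultimately have "V a > V 0" using V0 by linarith
    then show ?thesis using that a by auto
  qed
  obtain as where as: "as \<in> {0..1 - e/2}" "\<And>y. y \<in> {0..1 - e/2} \<Longrightarrow> V y \<le> V as"
  proof -
    have "{0..1 - e/2} \<subseteq> {0..<(1::real)}" using e by auto
    then have "continuous_on {0..1 - e/2} V" using continuous_on_subset[OF contV] by blast
    moreover have "{0..1 - e/2} \<noteq> {}" using e by auto
    ultimately show ?thesis using continuous_attains_sup[of "{0..1 - e/2}" V] that by auto
  qed
  have Vmax: "V a \<le> V as" if "0 \<le> a" "a < 1" for a
  proof (cases "a \<le> 1 - e/2")
    case True then show ?thesis using as that by auto
  next
    case False
    then have "V a < V 0" using e that by auto
    also have "V 0 \<le> V as" using as e by auto
    finally show ?thesis by simp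
  qed
  have as01: "0 \<le> as" "as < 1" using as e by auto
  have aspos: "0 < as"
  proof (rule ccontr)
    assume "\<not> 0 < as" then have "as = 0" using as01 by auto
    then show False using Vmax[of a1] a1 by auto
  qed
  have fermat: "wH - bH - (wL - bL) = C1 a"
    if F: "wt_feasible C u a wH wL bH bL" and a: "0 < a" for a wH wL bH bL
  proof -
    define d where "d = wH - bH - (wL - bL)"
    define g where "g t = t * d + (wL - bL) - C t" for t
    have a1: "a < 1" using F by (simp add: wt_feasible_def)
    have gw: "g t = wt_worker C wH wL bH bL t" for t
      by (simp add: g_def wt_worker_def d_def algebra_simps)
    have "(g has_real_derivative (d - C1 a)) (at a within {0..<1})"
      unfolding g_def using C1[of a] a a1
      by (auto intro!: derivative_eq_intros)
    then have "(g has_real_derivative (d - C1 a)) (at a within {0<..<1})"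
      by (rule DERIV_subset) auto
    then have der: "(g has_real_derivative (d - C1 a)) (at a)"
      using at_within_open[of a "{0<..<1}"] a a1 by auto
    have "\<forall>y. \<bar>a - y\<bar> < min a (1 - a) \<longrightarrow> g y \<le> g a"
    proof (intro allI impI)
      fix y assume "\<bar>a - y\<bar> < min a (1 - a)"
      then have "y \<in> {0..<1}" by auto
      then show "g y \<le> g a" using F unfolding gw wt_feasible_def by blast
    qed
    then have "d - C1 a = 0" using DERIV_local_max[OF der, of "min a (1 - a)"] a a1 by auto
    then show ?thesis by (simp add: d_def)
  qed
  define nL where "nL = max 0 (u + C as - as * C1 as)"
  define nH where "nH = nL + C1 as"
  have wc: "wt_worker C nH nL 0 0 t = nL + t * C1 as - C t" for t
    by (simp add: wt_worker_def nH_def algebra_simps)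
  have feas: "wt_feasible C u as nH nL 0 0"
    unfolding wt_feasible_def
  proof (intro conjI ballI)
    show "as \<in> {0..<1}" using as01 by auto
  next
    fix a' :: real assume "a' \<in> {0..<1}"
    then have "C a' - C as \<ge> C1 as * (a' - as)" using tang[of as a'] aspos as01 by auto
    then show "wt_worker C nH nL 0 0 a' \<le> wt_worker C nH nL 0 0 as"
      unfolding wc by (simp add: algebra_simps)
  next
    have "u \<le> nL + as * C1 as - C as" unfolding nL_def by simp
    then show "u \<le> wt_worker C nH nL 0 0 as" unfolding wc .
  next
    show "(0::real) \<le> 0" "0 \<le> nL" "(0::real) \<le> 0" by (auto simp: nL_def)
    show "0 \<le> nH" using C1nn[of as] aspos as01 by (simp add: nH_def nL_def)
  qed
  have objc: "wt_obj P yH yL \<gamma> \<eta> as nH nL 0 0 = V as"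
  proof -
    have "nL + as * C1 as = max (as * C1 as) (u + C as)" by (simp add: nL_def max_def)
    then show ?thesis unfolding wt_obj_def V_def D_def nH_def using \<eta>0 by (simp add: algebra_simps)
  qed
  have "wt_optimal P yH yL \<gamma> \<eta> C u as nH nL 0 0"
    unfolding wt_optimal_def
  proof (intro conjI allI impI feas)
    fix a wH wL bH bL assume F: "wt_feasible C u a wH wL bH bL"
    have a01: "0 \<le> a" "a < 1" and bs: "0 \<le> bL" "bL \<le> wL" "0 \<le> bH" "bH \<le> wH"
      and U: "wt_worker C wH wL bH bL a \<ge> u"
      using F by (auto simp: wt_feasible_def)
    have e1: "\<eta> bH \<ge> 0" using \<eta>mono bs \<eta>0 by (metis atLeast_iff mono_onD order_refl)
    have e2: "\<eta> bL \<ge> 0" using \<eta>mono bs \<eta>0 by (metis atLeast_iff mono_onD order_refl)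
    define nH' where "nH' = wH - bH"
    define nL' where "nL' = wL - bL"
    have "wt_obj P yH yL \<gamma> \<eta> a wH wL bH bL
        = P * yL + a * D - (nL' + a * (nH' - nL')) - \<gamma> * (a * \<eta> bH + (1 - a) * \<eta> bL)"
      unfolding wt_obj_def D_def nH'_def nL'_def by (simp add: algebra_simps)
    moreover have "\<gamma> * (a * \<eta> bH + (1 - a) * \<eta> bL) \<ge> 0"
      using \<gamma> a01 e1 e2 by simp
    moreover have "nL' + a * (nH' - nL') \<ge> u + C a"
      using U unfolding wt_worker_def nH'_def nL'_def by (simp add: algebra_simps)
    moreover have "nL' + a * (nH' - nL') \<ge> a * C1 a"
    proof (cases "a = 0")
      case True then show ?thesis using bs by (simp add: nL'_def)
    next
      case False
      then have "nH' - nL' = C1 a" using fermat[OF F] a01 by (simp add: nH'_def nL'_def)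
      then show ?thesis using bs by (simp add: nL'_def)
    qed
    ultimately have "wt_obj P yH yL \<gamma> \<eta> a wH wL bH bL \<le> V a"
      unfolding V_def by linarith
    also have "\<dots> \<le> V as" using Vmax a01 by auto
    finally show "wt_obj P yH yL \<gamma> \<eta> a wH wL bH bL \<le> wt_obj P yH yL \<gamma> \<eta> as nH nL 0 0"
      using objc by simp
  qed
  then show ?thesis using aspos as01 by blast
qed

end
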